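(* Let $X$ be a complex Banach space with a closed linear subspace $M$, and let $u_1,\dots,u_n\in X$ with $\|u_k\|=1$. Set $V_0:=\{0\}$ and $V_k:=\operatorname{Span}\{u_1,\dots,u_k\}$ for $k=1,\dots,n$. Let $\delta_1,\dots,\delta_n$ be positive numbers with $\operatorname{dist}(u_k,M+V_{k-1})\ge\delta_k$ for $k=1,\dots,n$, and set $\Delta_k:=\frac{\prod_{i=k}^n\delta_i}{\prod_{i=k+1}^n(1+\delta_i)}$ for $k=1,\dots,n$. Then $\delta_k\le1$ and $\dim(M+V_k)/M=k$ for all $k$, and $$\operatorname{dist}\Big(\sum_{k=1}^n a_ku_k,M\Big)\ge\frac{\Delta_1}{n}\sum_{k=1}^n|a_k|\quad\text{for all }a_1,\dots,a_n\in\mathbb{C},\qquad \gamma(V_n,M)\ge\frac{\Delta_1}{n}.$$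
   Context: For linear subspaces $A,B$, $\gamma(A,B):=\inf_{u\in A\setminus B}\frac{\operatorname{dist}(u,B)}{\operatorname{dist}(u,A\cap B)}$ if $A\not\subset B$, and $\gamma(A,B):=1$ if $A\subset B$. *)

theory Defs
  imports "HOL-Analysis.Analysis"
begin

class complex_banach = banach +
  fixes scaleC :: "complex \<Rightarrow> 'a \<Rightarrow> 'a" (infixr \<open>*\<^sub>C\<close> 75)
  assumes scaleC_add_right: "a *\<^sub>C (x + y) = a *\<^sub>C x + a *\<^sub>C y"
    and scaleC_add_left: "(a + b) *\<^sub>C x = a *\<^sub>C x + b *\<^sub>C x"
    and scaleC_scaleC: "a *\<^sub>C (b *\<^sub>C x) = (a * b) *\<^sub>C x"
    and scaleC_one: "1 *\<^sub>C x = x"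
    and scaleC_of_real: "complex_of_real r *\<^sub>C x = r *\<^sub>R x"
    and norm_scaleC: "norm (a *\<^sub>C x) = cmod a * norm x"

abbreviation csubspace :: "'a::complex_banach set \<Rightarrow> bool" where
  "csubspace \<equiv> module.subspace scaleC"

abbreviation cspan :: "'a::complex_banach set \<Rightarrow> 'a set" where
  "cspan \<equiv> module.span scaleC"

definition msum :: "'a::ab_group_add set \<Rightarrow> 'a set \<Rightarrow> 'a set" where
  "msum A B = {x + y | x y. x \<in> A \<and> y \<in> B}"

text \<open>A finite set B is linearly independent modulo M (i.e. its image in X/M
is linearly independent and injective).\<close>
definition indep_mod :: "'a::complex_banach set \<Rightarrow> 'a set \<Rightarrow> bool" where
  "indep_mod M B \<longleftrightarrow> finite B \<and>
     (\<forall>c. (\<Sum>b\<in>B. c b *\<^sub>C b) \<in> M \<longrightarrow> (\<forall>b\<in>B. c b = 0))"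

text \<open>Dimension of the quotient space S/M (for M \<subseteq> S): the maximal size of a
subset of S that is linearly independent modulo M.\<close>
definition quot_dim :: "'a::complex_banach set \<Rightarrow> 'a set \<Rightarrow> nat" where
  "quot_dim S M = Sup {card B | B. B \<subseteq> S \<and> indep_mod M B}"

definition gamma :: "'a::complex_banach set \<Rightarrow> 'a set \<Rightarrow> real" where
  "gamma A B = (if A \<subseteq> B then 1
     else Inf {infdist u B / infdist u (A \<inter> B) | u. u \<in> A - B})"

end

theory Submission
  imports Defs
begin
interpretation cv: vector_space "scaleC :: complex \<Rightarrow> 'a::complex_banach \<Rightarrow> 'a"
  by unfold_locales (auto simp: scaleC_add_right scaleC_add_left scaleC_scaleC scaleC_one)

lemma span_repr:
  fixes u :: "nat \<Rightarrow> 'a::complex_banach"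
  shows "cspan (u ` {1..k}) = range (\<lambda>a. \<Sum>i=1..k. a i *\<^sub>C u i)"
proof (induction k)
  case 0
  then show ?case by simp
next
  case (Suc k)
  have e: "u ` {1..Suc k} = insert (u (Suc k)) (u ` {1..k})"
    by (auto simp: atLeastAtMostSuc_conv)
  have s: "(\<Sum>i=1..Suc k. a i *\<^sub>C u i) = (\<Sum>i=1..k. a i *\<^sub>C u i) + a (Suc k) *\<^sub>C u (Suc k)" for a
    by simp
  show ?case
  proof (rule set_eqI, rule iffI)
    fix x assume "x \<in> cspan (u ` {1..Suc k})"
    then obtain c a where ca: "x - c *\<^sub>C u (Suc k) = (\<Sum>i=1..k. a i *\<^sub>C u i)"
      unfolding e cv.span_insert Suc by auto
    have "(\<Sum>i=1..k. (a(Suc k := c)) i *\<^sub>C u i) = (\<Sum>i=1..k. a i *\<^sub>C u i)"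
      by (rule sum.cong) auto
    then have "x = (\<Sum>i=1..Suc k. (a(Suc k := c)) i *\<^sub>C u i)"
      using ca s[of "a(Suc k := c)"] by (simp add: algebra_simps)
    then show "x \<in> range (\<lambda>a. \<Sum>i=1..Suc k. a i *\<^sub>C u i)" by blast
  next
    fix x assume "x \<in> range (\<lambda>a. \<Sum>i=1..Suc k. a i *\<^sub>C u i)"
    then obtain a where "x = (\<Sum>i=1..Suc k. a i *\<^sub>C u i)" by blast
    then have "x - a (Suc k) *\<^sub>C u (Suc k) = (\<Sum>i=1..k. a i *\<^sub>C u i)" using s by simp
    then show "x \<in> cspan (u ` {1..Suc k})"
      unfolding e cv.span_insert Suc by auto
  qed
qed

lemma key_step:
  fixes M :: "'a::complex_banach set" and u :: "nat \<Rightarrow> 'a" and \<delta> :: "nat \<Rightarrow> real"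
  assumes sub: "csubspace M"
    and nu: "norm (u k) = 1"
    and k1: "1 \<le> k"
    and dk: "infdist (u k) (msum M (cspan (u ` {1..k-1}))) \<ge> \<delta> k"
    and m: "m \<in> M"
  shows "cmod (a k) * \<delta> k \<le> norm ((\<Sum>i=1..k. a i *\<^sub>C u i) - m)"
proof (cases "a k = 0")
  case True
  then show ?thesis by simp
next
  case False
  obtain j where kj: "k = Suc j" using k1 by (cases k) auto
  let ?x = "\<Sum>i=1..j. a i *\<^sub>C u i"
  have sk: "(\<Sum>i=1..k. a i *\<^sub>C u i) = ?x + a k *\<^sub>C u k" using kj by simp
  define w where "w = inverse (a k) *\<^sub>C m + (- inverse (a k)) *\<^sub>C ?x"
  have "?x \<in> cspan (u ` {1..j})" using span_repr[of u j] by auto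
  then have "(- inverse (a k)) *\<^sub>C ?x \<in> cspan (u ` {1..j})" by (rule cv.span_scale)
  moreover have "inverse (a k) *\<^sub>C m \<in> M" using sub m by (rule cv.subspace_scale)
  ultimately have "w \<in> {x + y |x y. x \<in> M \<and> y \<in> cspan (u ` {1..j})}"
    unfolding w_def by blast
  then have wM: "w \<in> msum M (cspan (u ` {1..k-1}))"
    unfolding msum_def using kj by simp
  have "a k *\<^sub>C (u k - w) = a k *\<^sub>C u k - (a k * inverse (a k)) *\<^sub>C m + (a k * inverse (a k)) *\<^sub>C ?x"
    unfolding w_def by (simp add: cv.scale_right_diff_distrib scaleC_add_right scaleC_scaleC cv.scale_minus_right)
  also have "\<dots> = (\<Sum>i=1..k. a i *\<^sub>C u i) - m" using False sk by (simp add: scaleC_one)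
  finally have eq: "a k *\<^sub>C (u k - w) = (\<Sum>i=1..k. a i *\<^sub>C u i) - m" .
  have "\<delta> k \<le> dist (u k) w" using dk infdist_le[OF wM, of "u k"] by linarith
  then have "cmod (a k) * \<delta> k \<le> cmod (a k) * norm (u k - w)"
    by (simp add: dist_norm mult_left_mono)
  also have "\<dots> = norm ((\<Sum>i=1..k. a i *\<^sub>C u i) - m)" using eq norm_scaleC by metis
  finally show ?thesis .
qed

lemma main_ineq:
  fixes M :: "'a::complex_banach set" and u :: "nat \<Rightarrow> 'a" and \<delta> :: "nat \<Rightarrow> real"
    and a :: "nat \<Rightarrow> complex"
  assumes sub: "csubspace M"
    and nu: "\<forall>k\<in>{1..n}. norm (u k) = 1"
    and dpos: "\<forall>k\<in>{1..n}. \<delta> k > 0"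
    and dk: "\<forall>k\<in>{1..n}. infdist (u k) (msum M (cspan (u ` {1..k-1}))) \<ge> \<delta> k"
    and k: "k \<in> {1..n}"
  shows "cmod (a k) * ((\<Prod>i=k..n. \<delta> i) / (\<Prod>i=k+1..n. (1 + \<delta> i)))
          \<le> infdist (\<Sum>i=1..n. a i *\<^sub>C u i) M"
proof -
  define x where "x k = (\<Sum>i=1..k. a i *\<^sub>C u i)" for k
  define D where "D k = infdist (x k) M" for k
  have Mne: "M \<noteq> {}" using cv.subspace_0[OF sub] by auto
  have low: "cmod (a k) * \<delta> k \<le> D k" if "k \<in> {1..n}" for k
    unfolding D_def infdist_notempty[OF Mne]
  proof (rule cINF_greatest[OF Mne])
    fix m assume "m \<in> M"
    then show "cmod (a k) * \<delta> k \<le> dist (x k) m"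
      unfolding dist_norm x_def
      using key_step[OF sub, of u k \<delta> m a] that nu dk by auto
  qed
  have tri: "D (k-1) \<le> D k + cmod (a k)" if kin: "k \<in> {1..n}" for k
  proof -
    have "k \<noteq> 0" using kin by auto
    then obtain j where kj: "k = Suc j" using not0_implies_Suc by blast
    have "x k = x j + a k *\<^sub>C u k" using kj by (simp add: x_def)
    then have "dist (x j) (x k) = cmod (a k)"
      using nu that by (simp add: dist_norm norm_scaleC)
    then show ?thesis using infdist_triangle[of "x j" M "x k"] kj by (simp add: D_def)
  qed
  have E: "j \<le> n \<Longrightarrow> D (n-j) * (\<Prod>i=n-j+1..n. \<delta> i) \<le> D n * (\<Prod>i=n-j+1..n. (1 + \<delta> i))" for j
  proof (induction j)
    case 0
    then show ?case by simp
  next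
    case (Suc j)
    define K where "K = n - j"
    have K: "K \<in> {1..n}" using Suc.prems by (auto simp: K_def)
    have e1: "n - Suc j = K - 1" "n - Suc j + 1 = K" "n - j + 1 = K + 1"
      using Suc.prems by (auto simp: K_def)
    define P where "P = (\<Prod>i=K+1..n. \<delta> i)"
    define Q where "Q = (\<Prod>i=K+1..n. (1 + \<delta> i))"
    have P0: "P \<ge> 0" unfolding P_def using dpos by (intro prod_nonneg) (auto simp: less_imp_le)
    have IH: "D K * P \<le> D n * Q" using Suc K_def e1 P_def Q_def by auto
    have pK: "(\<Prod>i=K..n. \<delta> i) = \<delta> K * P" "(\<Prod>i=K..n. (1 + \<delta> i)) = (1 + \<delta> K) * Q"
      using K by (auto simp: P_def Q_def prod.atLeast_Suc_atMost)
    have dK: "\<delta> K > 0" using K dpos by auto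
    have D0: "D K \<ge> 0" by (simp add: D_def infdist_nonneg)
    have "D (K-1) * (\<delta> K * P) \<le> (D K + cmod (a K)) * (\<delta> K * P)"
      using tri[OF K] dK P0 by (intro mult_right_mono) auto
    also have "\<dots> = \<delta> K * (D K * P) + (cmod (a K) * \<delta> K) * P" by (simp add: algebra_simps)
    also have "\<dots> \<le> \<delta> K * (D K * P) + D K * P"
      using low[OF K] P0 by (intro add_left_mono mult_right_mono) auto
    also have "\<dots> = (1 + \<delta> K) * (D K * P)" by (simp add: algebra_simps)
    also have "\<dots> \<le> (1 + \<delta> K) * (D n * Q)" using IH dK by (intro mult_left_mono) auto
    finally show ?case using e1 pK by (simp add: algebra_simps)
  qed
  define P where "P = (\<Prod>i=k+1..n. \<delta> i)"
  define Q where "Q = (\<Prod>i=k+1..n. (1 + \<delta> i))"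
  have P0: "P \<ge> 0" unfolding P_def using dpos by (intro prod_nonneg) (auto simp: less_imp_le)
  have Q0: "Q > 0" unfolding Q_def using dpos by (intro prod_pos) (auto simp: add_pos_pos)
  have "D k * P \<le> D n * Q" using E[of "n - k"] k by (auto simp: P_def Q_def)
  moreover have "cmod (a k) * \<delta> k * P \<le> D k * P" using low[OF k] P0 by (rule mult_right_mono)
  ultimately have "cmod (a k) * (\<delta> k * P) \<le> D n * Q" by (simp add: mult.assoc)
  then have fin: "cmod (a k) * (\<delta> k * P / Q) \<le> D n" using Q0
    by (simp add: pos_divide_le_eq)
  have pe: "(\<Prod>i=k..n. \<delta> i) = \<delta> k * P"
    using k by (auto simp: P_def prod.atLeast_Suc_atMost)
  show ?thesis unfolding pe Q_def[symmetric] using fin by (simp add: D_def x_def)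
qed

theorem lemma2p8:
  fixes M :: "'a::complex_banach set"
    and u :: "nat \<Rightarrow> 'a"
    and \<delta> :: "nat \<Rightarrow> real"
    and n :: nat
    and V :: "nat \<Rightarrow> 'a set"
    and \<Delta> :: "nat \<Rightarrow> real"
  assumes "closed M" and "csubspace M"
    and "n \<ge> 1"
    and "\<forall>k\<in>{1..n}. norm (u k) = 1"
    and V_def: "\<forall>k. V k = cspan (u ` {1..k})"
    and "\<forall>k\<in>{1..n}. \<delta> k > 0"
    and "\<forall>k\<in>{1..n}. infdist (u k) (msum M (V (k - 1))) \<ge> \<delta> k"
    and \<Delta>_def: "\<forall>k. \<Delta> k = (\<Prod>i=k..n. \<delta> i) / (\<Prod>i=k+1..n. (1 + \<delta> i))"
  shows "(\<forall>k\<in>{1..n}. \<delta> k \<le> 1)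
    \<and> (\<forall>k\<in>{0..n}. quot_dim (msum M (V k)) M = k)
    \<and> (\<forall>a :: nat \<Rightarrow> complex.
          infdist (\<Sum>k=1..n. a k *\<^sub>C u k) M \<ge> \<Delta> 1 / real n * (\<Sum>k=1..n. cmod (a k)))
    \<and> gamma (V n) M \<ge> \<Delta> 1 / real n"
proof -
  note sub = assms(2) and n1 = assms(3) and nu = assms(4) and dpos = assms(6)
  have dk: "\<forall>k\<in>{1..n}. infdist (u k) (msum M (cspan (u ` {1..k-1}))) \<ge> \<delta> k"
    using assms(7) V_def by auto
  have M0: "0 \<in> M" using cv.subspace_0[OF sub] .
  have Vrep: "V k = range (\<lambda>a. \<Sum>i=1..k. a i *\<^sub>C u i)" for k
    using V_def span_repr[of u k] by auto
  have d1: "\<forall>k\<in>{1..n}. \<delta> k \<le> 1"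
  proof
    fix k assume k: "k \<in> {1..n}"
    have "0 \<in> V (k-1)" using V_def cv.span_zero by simp
    then have "0 + 0 \<in> msum M (V (k-1))" unfolding msum_def using M0 by blast
    then have "0 \<in> msum M (V (k-1))" by simp
    then have "infdist (u k) (msum M (V (k-1))) \<le> 1"
      using infdist_le[of 0 _ "u k"] nu k by auto
    then show "\<delta> k \<le> 1" using assms(7) k by fastforce
  qed
  have "(\<Prod>i=1..n. \<delta> i) / (\<Prod>i=1+1..n. (1 + \<delta> i)) > 0"
    using dpos by (auto intro!: divide_pos_pos prod_pos simp: add_pos_pos)
  then have Dpos: "\<Delta> 1 > 0" using \<Delta>_def by simp
  have Dstep: "\<Delta> k \<le> \<Delta> (Suc k)" if "1 \<le> k" "k < n" for k
  proof -
    define P where "P = (\<Prod>i=Suc k..n. \<delta> i)"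
    define Q where "Q = (\<Prod>i=Suc (Suc k)..n. (1 + \<delta> i))"
    have P0: "P \<ge> 0" unfolding P_def using dpos that by (intro prod_nonneg) (auto simp: less_imp_le)
    have Q0: "Q > 0" unfolding Q_def using dpos by (intro prod_pos) (auto simp: add_pos_pos)
    have a: "\<Delta> k = \<delta> k * P / ((1 + \<delta> (Suc k)) * Q)"
      using that by (simp add: \<Delta>_def P_def Q_def prod.atLeast_Suc_atMost)
    have b: "\<Delta> (Suc k) = P / Q" by (simp add: \<Delta>_def P_def Q_def)
    have dk1: "\<delta> k \<le> 1" "0 < \<delta> (Suc k)" "0 < \<delta> k" using d1 dpos that by auto
    have "\<delta> k * P / ((1 + \<delta> (Suc k)) * Q) \<le> 1 * P / (1 * Q)"
      using dk1 P0 Q0 by (intro frac_le mult_right_mono mult_pos_pos) auto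
    then show ?thesis using a b by simp
  qed
  have Dmono: "k \<in> {1..n} \<Longrightarrow> \<Delta> 1 \<le> \<Delta> k" for k
  proof (induction k)
    case 0 then show ?case by simp
  next
    case (Suc k)
    show ?case
    proof (cases "k = 0")
      case True then show ?thesis by simp
    next
      case False
      then show ?thesis using Suc Dstep[of k] by force
    qed
  qed
  have mi: "\<Delta> 1 / real n * (\<Sum>k=1..n. cmod (a k)) \<le> infdist (\<Sum>k=1..n. a k *\<^sub>C u k) M" for a
  proof -
    let ?d = "infdist (\<Sum>k=1..n. a k *\<^sub>C u k) M"
    have "\<Delta> 1 * cmod (a k) \<le> ?d" if k: "k \<in> {1..n}" for k
    proof -
      have "\<Delta> 1 * cmod (a k) \<le> \<Delta> k * cmod (a k)" using Dmono[OF k] by (simp add: mult_right_mono)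
      also have "\<dots> \<le> ?d" using main_ineq[OF sub nu dpos dk k, of a] \<Delta>_def by (simp add: mult.commute)
      finally show ?thesis .
    qed
    then have "(\<Sum>k=1..n. \<Delta> 1 * cmod (a k)) \<le> (\<Sum>k=1..n. ?d)" by (intro sum_mono) auto
    then have "\<Delta> 1 * (\<Sum>k=1..n. cmod (a k)) \<le> real n * ?d" by (simp add: sum_distrib_left)
    then show ?thesis using n1 by (simp add: field_simps)
  qed
  have zero_coeffs: "\<forall>k\<in>{1..n}. a k = 0" if "(\<Sum>k=1..n. a k *\<^sub>C u k) \<in> M" for a
  proof -
    have "\<Delta> 1 / real n * (\<Sum>k=1..n. cmod (a k)) \<le> 0" using mi[of a] that by simp
    moreover have "\<Delta> 1 / real n > 0" using Dpos n1 by simp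
    ultimately have "(\<Sum>k=1..n. cmod (a k)) \<le> 0"
      by (metis mult_pos_pos not_le)
    then have "(\<Sum>k=1..n. cmod (a k)) = 0" using sum_nonneg[of "{1..n}" "\<lambda>k. cmod (a k)"] by simp
    then show ?thesis by (simp add: sum_nonneg_eq_0_iff)
  qed
  have uinj: "inj_on u {1..n}"
  proof (rule linorder_inj_onI)
    fix i j assume ij: "i < j" "i \<in> {1..n}" "j \<in> {1..n}"
    show "u i \<noteq> u j"
    proof
      assume e: "u i = u j"
      have "u i \<in> cspan (u ` {1..j-1})" using ij by (intro cv.span_base) auto
      then have "0 + u i \<in> msum M (cspan (u ` {1..j-1}))" unfolding msum_def using M0 by blast
      then have "infdist (u j) (msum M (cspan (u ` {1..j-1}))) = 0" using e by simp
      then show False using dk dpos ij(3) by fastforce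
    qed
  qed auto
  have part2: "\<forall>k\<in>{0..n}. quot_dim (msum M (V k)) M = k"
  proof
    fix k assume k: "k \<in> {0..n}"
    have injk: "inj_on u {1..k}" using k by (intro inj_on_subset[OF uinj]) auto
    let ?S = "{card B | B. B \<subseteq> msum M (V k) \<and> indep_mod M B}"
    have kS: "k \<in> ?S"
    proof -
      have sub1: "u ` {1..k} \<subseteq> msum M (V k)"
      proof
        fix x assume "x \<in> u ` {1..k}"
        then have "x \<in> cspan (u ` {1..k})" by (rule cv.span_base)
        then have "x \<in> V k" using V_def by simp
        then have "0 + x \<in> msum M (V k)" unfolding msum_def using M0 by blast
        then show "x \<in> msum M (V k)" by simp
      qed
      have ind: "indep_mod M (u ` {1..k})"
        unfolding indep_mod_def
      proof (intro conjI allI impI ballI)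
        fix c b assume cM: "(\<Sum>b\<in>u ` {1..k}. c b *\<^sub>C b) \<in> M" and b: "b \<in> u ` {1..k}"
        define a where "a i = (if i \<le> k then c (u i) else 0)" for i
        have "(\<Sum>i=1..n. a i *\<^sub>C u i) = (\<Sum>i=1..k. a i *\<^sub>C u i)"
          using k by (intro sum.mono_neutral_right) (auto simp: a_def)
        also have "\<dots> = (\<Sum>i=1..k. c (u i) *\<^sub>C u i)" by (intro sum.cong) (auto simp: a_def)
        also have "\<dots> = (\<Sum>b\<in>u ` {1..k}. c b *\<^sub>C b)" using sum.reindex[OF injk, of "\<lambda>b. c b *\<^sub>C b"] by simp
        finally have "(\<Sum>i=1..n. a i *\<^sub>C u i) \<in> M" using cM by simp
        then have z: "\<forall>i\<in>{1..n}. a i = 0" by (rule zero_coeffs)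
        obtain i where i: "i \<in> {1..k}" "b = u i" using b by auto
        have "i \<in> {1..n}" using i k by auto
        then have "a i = 0" using z by blast
        then show "c b = 0" using i by (simp add: a_def)
      qed simp
      have "card (u ` {1..k}) = k" using card_image[OF injk] by simp
      then have "k = card (u ` {1..k}) \<and> u ` {1..k} \<subseteq> msum M (V k) \<and> indep_mod M (u ` {1..k})"
        using sub1 ind by simp
      then show ?thesis by (intro CollectI exI[of _ "u ` {1..k}"])
    qed
    have bound: "card B \<le> k" if B: "B \<subseteq> msum M (V k)" "indep_mod M B" for B
    proof -
      have finB: "finite B" using B(2) by (simp add: indep_mod_def)
      define f where "f b = (SOME v. v \<in> V k \<and> b - v \<in> M)" for b
      have fB: "f b \<in> V k \<and> b - f b \<in> M" if bB: "b \<in> B" for b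
      proof -
        obtain m v where "b = m + v" "m \<in> M" "v \<in> V k" using B(1) bB unfolding msum_def by blast
        then have "\<exists>v. v \<in> V k \<and> b - v \<in> M" by (intro exI[of _ v]) simp
        then show ?thesis unfolding f_def by (rule someI_ex)
      qed
      have fam: "\<forall>b\<in>B. c b = 0" if c: "(\<Sum>b\<in>B. c b *\<^sub>C f b) = 0" for c
      proof -
        have "(\<Sum>b\<in>B. c b *\<^sub>C b) = (\<Sum>b\<in>B. c b *\<^sub>C (b - f b)) + (\<Sum>b\<in>B. c b *\<^sub>C f b)"
          by (simp add: sum.distrib[symmetric] cv.scale_right_diff_distrib)
        also have "\<dots> = (\<Sum>b\<in>B. c b *\<^sub>C (b - f b))" using c by simp
        also have "\<dots> \<in> M" using fB by (intro cv.subspace_sum[OF sub] cv.subspace_scale[OF sub]) auto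
        finally show ?thesis using B(2) unfolding indep_mod_def by blast
      qed
      have finj: "inj_on f B"
      proof (rule inj_onI, rule ccontr)
        fix b1 b2 assume b: "b1 \<in> B" "b2 \<in> B" "f b1 = f b2" "b1 \<noteq> b2"
        define c where "c b = (if b = b1 then 1 else 0) - (if b = b2 then 1 else (0::complex))" for b
        have cb: "c b *\<^sub>C f b = c b *\<^sub>C f b1" for b
          using b by (cases "b = b1 \<or> b = b2") (auto simp: c_def)
        have "(\<Sum>b\<in>B. c b *\<^sub>C f b) = (\<Sum>b\<in>B. c b *\<^sub>C f b1)"
          by (rule sum.cong[OF refl cb])
        also have "\<dots> = (\<Sum>b\<in>B. c b) *\<^sub>C f b1"
          by (simp add: cv.scale_sum_left)
        also have "(\<Sum>b\<in>B. c b) = 0" using b finB by (simp add: c_def sum_subtractf)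
        finally have "(\<Sum>b\<in>B. c b *\<^sub>C f b) = 0" by (simp add: scaleC_of_real[of 0, simplified])
        then have "c b1 = 0" using fam b by blast
        then show False using b by (simp add: c_def)
      qed
      have indf: "cv.independent (f ` B)"
      proof (rule cv.independent_if_scalars_zero)
        show "finite (f ` B)" using finB by simp
      next
        fix g x assume g: "(\<Sum>x\<in>f ` B. g x *\<^sub>C x) = 0" and x: "x \<in> f ` B"
        have "(\<Sum>b\<in>B. g (f b) *\<^sub>C f b) = 0" using g sum.reindex[OF finj, of "\<lambda>x. g x *\<^sub>C x"] by simp
        then have "\<forall>b\<in>B. g (f b) = 0" by (rule fam)
        then show "g x = 0" using x by auto
      qed
      have "f ` B \<subseteq> cv.span (u ` {1..k})" using fB V_def by auto
      then have "card (f ` B) \<le> card (u ` {1..k})"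
        using cv.independent_span_bound[OF _ indf] by blast
      also have "\<dots> \<le> k" using card_image_le[of "{1..k}" u] by simp
      finally show ?thesis using card_image[OF finj] by simp
    qed
    show "quot_dim (msum M (V k)) M = k" unfolding quot_dim_def
      by (rule cSup_eq_maximum[OF kS]) (use bound in blast)
  qed
  have Dn1: "\<Delta> 1 \<le> 1"
  proof -
    have "\<Delta> n = \<delta> n" using \<Delta>_def by simp
    then show ?thesis using Dmono[of n] d1 n1 by force
  qed
  have VM: "V n \<inter> M = {0}"
  proof
    show "{0} \<subseteq> V n \<inter> M" using M0 V_def cv.span_zero by auto
  next
    show "V n \<inter> M \<subseteq> {0}"
    proof
      fix y assume y: "y \<in> V n \<inter> M"
      then obtain a where ya: "y = (\<Sum>k=1..n. a k *\<^sub>C u k)" using Vrep[of n] by auto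
      then have "\<forall>k\<in>{1..n}. a k = 0" using zero_coeffs y by blast
      then have "y = 0" unfolding ya by (simp add: scaleC_of_real[of 0, simplified])
      then show "y \<in> {0}" by simp
    qed
  qed
  have part4: "gamma (V n) M \<ge> \<Delta> 1 / real n"
  proof (cases "V n \<subseteq> M")
    case True
    then show ?thesis unfolding gamma_def using Dn1 Dpos n1
      by (simp add: divide_le_eq order_trans[OF Dn1])
  next
    case False
    let ?G = "{infdist x M / infdist x (V n \<inter> M) | x. x \<in> V n - M}"
    have ne: "?G \<noteq> {}" using False by auto
    have "\<Delta> 1 / real n \<le> Inf ?G"
    proof (rule cInf_greatest[OF ne])
      fix g assume "g \<in> ?G"
      then obtain x where x: "x \<in> V n" "x \<notin> M" and g: "g = infdist x M / infdist x (V n \<inter> M)"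
        by blast
      obtain a where xa: "x = (\<Sum>k=1..n. a k *\<^sub>C u k)" using x Vrep[of n] by auto
      have idd: "infdist x (V n \<inter> M) = norm x" unfolding VM by simp
      have np: "norm x > 0" using x M0 by (metis zero_less_norm_iff)
      have "norm x \<le> (\<Sum>k=1..n. norm (a k *\<^sub>C u k))" unfolding xa by (rule norm_sum)
      also have "\<dots> = (\<Sum>k=1..n. cmod (a k))" using nu by (intro sum.cong) (auto simp: norm_scaleC)
      finally have nx: "norm x \<le> (\<Sum>k=1..n. cmod (a k))" .
      have c0: "\<Delta> 1 / real n \<ge> 0" using Dpos by simp
      have "\<Delta> 1 / real n * norm x \<le> \<Delta> 1 / real n * (\<Sum>k=1..n. cmod (a k))"
        using nx c0 by (rule mult_left_mono)
      also have "\<dots> \<le> infdist x M" using mi[of a] xa by simp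
      finally show "\<Delta> 1 / real n \<le> g" unfolding g idd using np by (simp add: pos_le_divide_eq)
    qed
    then show ?thesis unfolding gamma_def using False by simp
  qed
  show ?thesis using d1 part2 mi part4 by blast
qed

end
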